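(* For $n\ge 2$, let $Q_n^B$ denote the number of relative derangements of type $B$ on $[n]$ and $D_n^B$ the number of derangements of type $B$ on $[n]$ (with $D_0^B=1$). Then $$Q_n^B = D_n^B + D_{n-1}^B.$$
   Context: Let $[n]=\{1,\dots,n\}$. A signed permutation on $[n]$ is a bijection $\pi$ of $\{\bar 1,\dots,\bar n,1,\dots,n\}$ with $\pi(\bar i)=\overline{\pi(i)}$; equivalently, a word $\pi_1\pi_2\cdots\pi_n$ which is an ordinary permutation of $[n]$ in which some entries carry a bar. A derangement of type $B$ on $[n]$ is a signed permutation $\pi_1\cdots\pi_n$ with $\pi_i\neq i$ (as a signed element, i.e. $\pi_i=\bar i$ is allowed) for all $i\in[n]$. A relative derangement of type $B$ on $[n]$ is a signed permutation $\pi_1\cdots\pi_n$ on $[n]$ such that for every $1\le i\le n-1$, the entry $i$ is not immediately followed by $i+1$, and the entry $\bar i$ is not immediately followed by $\overline{i+1}$. *)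

theory Defs
  imports Main
begin

text \<open>A signed permutation on [n] is encoded as the word pi_1 ... pi_n, a list of integers
  of length n; the barred element (bar i) is encoded as the negative integer -i.\<close>

definition signed_perms :: "nat \<Rightarrow> int list set" where
  "signed_perms n = {xs. length xs = n \<and> distinct (map abs xs) \<and>
      set (map abs xs) = {1..int n}}"

definition derangements_B :: "nat \<Rightarrow> int list set" where
  "derangements_B n = {xs \<in> signed_perms n. \<forall>k<n. xs ! k \<noteq> int k + 1}"

definition rel_derangements_B :: "nat \<Rightarrow> int list set" where
  "rel_derangements_B n = {xs \<in> signed_perms n. \<forall>k. k + 1 < n \<longrightarrow>
      (\<forall>i::int. 1 \<le> i \<and> i \<le> int n - 1 \<longrightarrow>
         \<not> (xs ! k = i \<and> xs ! (k+1) = i + 1) \<and> \<not> (xs ! k = - i \<and> xs ! (k+1) = - (i + 1)))}"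

definition D_B :: "nat \<Rightarrow> nat" where
  "D_B n = card (derangements_B n)"

definition Q_B :: "nat \<Rightarrow> nat" where
  "Q_B n = card (rel_derangements_B n)"

end

theory Submission
  imports Defs
begin


lemma sp_iff: "xs \<in> signed_perms n \<longleftrightarrow> length xs = n \<and> distinct (map abs xs) \<and> set (map abs xs) = {1..int n}"
  by (simp add: signed_perms_def)

lemma finite_sp: "finite (signed_perms n)"
proof -
  have "signed_perms n \<subseteq> {xs. set xs \<subseteq> {-int n..int n} \<and> length xs = n}"
  proof
    fix xs assume "xs \<in> signed_perms n"
    hence L: "length xs = n" and S: "set (map abs xs) = {1..int n}" by (auto simp: sp_iff)
    have "set xs \<subseteq> {-int n..int n}"
    proof
      fix x assume "x \<in> set xs"
      hence "abs x \<in> set (map abs xs)" by auto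
      with S show "x \<in> {-int n..int n}" by auto
    qed
    with L show "xs \<in> {xs. set xs \<subseteq> {-int n..int n} \<and> length xs = n}" by auto
  qed
  moreover have "finite {xs. set xs \<subseteq> {-int n..int n} \<and> length xs = n}"
    by (rule finite_lists_length_eq) simp
  ultimately show ?thesis by (rule finite_subset)
qed

lemma sp_nth_range: "xs \<in> signed_perms n \<Longrightarrow> k < n \<Longrightarrow> 1 \<le> abs (xs!k) \<and> abs (xs!k) \<le> int n"
proof -
  assume a: "xs \<in> signed_perms n" "k < n"
  hence "abs (xs!k) \<in> set (map abs xs)" by (auto simp: sp_iff)
  with a show ?thesis by (auto simp: sp_iff)
qed

lemma sp_nth_inj: "xs \<in> signed_perms n \<Longrightarrow> i < n \<Longrightarrow> k < n \<Longrightarrow> abs (xs!i) = abs (xs!k) \<Longrightarrow> i = k"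
  by (auto simp: sp_iff distinct_conv_nth)

lemma sp_exists: "xs \<in> signed_perms n \<Longrightarrow> 1 \<le> a \<Longrightarrow> a \<le> int n \<Longrightarrow> \<exists>k<n. abs (xs!k) = a"
proof -
  assume a: "xs \<in> signed_perms n" "1 \<le> a" "a \<le> int n"
  hence "a \<in> set (map abs xs)" by (auto simp: sp_iff)
  then obtain k where "k < length xs" "abs (xs!k) = a" by (auto simp: in_set_conv_nth)
  with a show ?thesis by (auto simp: sp_iff)
qed

definition bd :: "int \<Rightarrow> int \<Rightarrow> bool" where
  "bd a b \<longleftrightarrow> (0 < a \<and> b = a + 1) \<or> (a < 0 \<and> b = a - 1)"

fun bonds :: "int list \<Rightarrow> nat" where
  "bonds (a # b # xs) = (if bd a b then 1 else 0) + bonds (b # xs)"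
| "bonds _ = 0"

lemma bonds_Cons: "bonds (a # xs) = (if xs \<noteq> [] \<and> bd a (hd xs) then 1 else 0) + bonds xs"
  by (cases xs) auto

lemma bonds_append: "bonds (xs @ ys) = bonds xs + bonds ys + (if xs \<noteq> [] \<and> ys \<noteq> [] \<and> bd (last xs) (hd ys) then 1 else 0)"
  by (induction xs) (auto simp: bonds_Cons)

definition bset :: "int list \<Rightarrow> nat set" where
  "bset xs = {p. 0 < p \<and> p < length xs \<and> bd (xs!(p-1)) (xs!p)}"

lemma bset_Cons: "xs \<noteq> [] \<Longrightarrow> bset (a # xs) = (if bd a (hd xs) then {1} else {}) \<union> Suc ` bset xs"
proof (rule set_eqI)
  fix p
  assume ne: "xs \<noteq> []"
  show "p \<in> bset (a # xs) \<longleftrightarrow> p \<in> (if bd a (hd xs) then {1} else {}) \<union> Suc ` bset xs"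
  proof (cases p)
    case 0 then show ?thesis by (auto simp: bset_def)
  next
    case (Suc q)
    show ?thesis
    proof (cases q)
      case 0
      then show ?thesis using Suc ne by (auto simp: bset_def hd_conv_nth)
    next
      case (Suc r)
      then show ?thesis using \<open>p = Suc q\<close> by (auto simp: bset_def)
    qed
  qed
qed

lemma finite_bset: "finite (bset xs)"
  unfolding bset_def by (rule finite_subset[of _ "{..<length xs}"]) auto

lemma bonds_bset: "bonds xs = card (bset xs)"
proof (induction xs)
  case Nil
  then show ?case by (simp add: bset_def)
next
  case (Cons a xs)
  show ?case
  proof (cases "xs = []")
    case True
    have "bset [a] = {}" by (auto simp: bset_def)
    then show ?thesis using True by simp
  next
    case False
    have "1 \<notin> Suc ` bset xs" by (auto simp: bset_def)
    moreover have "card (Suc ` bset xs) = card (bset xs)" by (simp add: card_image)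
    ultimately show ?thesis using False Cons finite_bset[of xs]
      by (simp add: bset_Cons bonds_Cons)
  qed
qed

definition fset :: "int list \<Rightarrow> nat set" where
  "fset xs = {k. k < length xs \<and> xs!k = int k + 1}"

definition fixc :: "int list \<Rightarrow> nat" where
  "fixc xs = card (fset xs)"

lemma finite_fset: "finite (fset xs)"
  unfolding fset_def by (rule finite_subset[of _ "{..<length xs}"]) auto

lemma D_B_eq: "derangements_B n = {xs \<in> signed_perms n. fixc xs = 0}"
  unfolding derangements_B_def fixc_def
  using finite_fset by (auto simp: fset_def sp_iff)

lemma Q_B_eq: "rel_derangements_B n = {xs \<in> signed_perms n. bonds xs = 0}"
proof -
  have "(\<forall>k. k + 1 < n \<longrightarrow>
      (\<forall>i::int. 1 \<le> i \<and> i \<le> int n - 1 \<longrightarrow>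
         \<not> (xs ! k = i \<and> xs ! (k+1) = i + 1) \<and> \<not> (xs ! k = - i \<and> xs ! (k+1) = - (i + 1))))
     \<longleftrightarrow> bonds xs = 0" if sp: "xs \<in> signed_perms n" for xs
  proof -
    have L: "length xs = n" using sp by (simp add: sp_iff)
    have "bonds xs = 0 \<longleftrightarrow> bset xs = {}" using finite_bset[of xs] by (simp add: bonds_bset)
    also have "\<dots> \<longleftrightarrow> (\<forall>p. 0 < p \<and> p < n \<longrightarrow> \<not> bd (xs!(p-1)) (xs!p))"
      by (auto simp: bset_def L)
    also have "\<dots> \<longleftrightarrow> (\<forall>k. k + 1 < n \<longrightarrow> \<not> bd (xs!k) (xs!(k+1)))"
    proof
      assume H: "\<forall>p. 0 < p \<and> p < n \<longrightarrow> \<not> bd (xs!(p-1)) (xs!p)"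
      show "\<forall>k. k + 1 < n \<longrightarrow> \<not> bd (xs!k) (xs!(k+1))"
      proof (intro allI impI)
        fix k assume "k + 1 < n"
        with H[rule_format, of "k+1"] show "\<not> bd (xs!k) (xs!(k+1))" by simp
      qed
    next
      assume H: "\<forall>k. k + 1 < n \<longrightarrow> \<not> bd (xs!k) (xs!(k+1))"
      show "\<forall>p. 0 < p \<and> p < n \<longrightarrow> \<not> bd (xs!(p-1)) (xs!p)"
      proof (intro allI impI)
        fix p assume p: "0 < p \<and> p < n"
        then have "p - 1 + 1 < n" "p - 1 + 1 = p" by auto
        with H[rule_format, of "p-1"] show "\<not> bd (xs!(p-1)) (xs!p)" by simp
      qed
    qed
    finally have E1: "bonds xs = 0 \<longleftrightarrow> (\<forall>k. k + 1 < n \<longrightarrow> \<not> bd (xs!k) (xs!(k+1)))" .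
    have E2: "(\<forall>i::int. 1 \<le> i \<and> i \<le> int n - 1 \<longrightarrow>
         \<not> (xs ! k = i \<and> xs ! (k+1) = i + 1) \<and> \<not> (xs ! k = - i \<and> xs ! (k+1) = - (i + 1)))
         \<longleftrightarrow> \<not> bd (xs!k) (xs!(k+1))" if k: "k + 1 < n" for k
    proof
      assume H: "\<forall>i::int. 1 \<le> i \<and> i \<le> int n - 1 \<longrightarrow>
         \<not> (xs ! k = i \<and> xs ! (k+1) = i + 1) \<and> \<not> (xs ! k = - i \<and> xs ! (k+1) = - (i + 1))"
      show "\<not> bd (xs!k) (xs!(k+1))"
      proof
        assume B: "bd (xs!k) (xs!(k+1))"
        have r1: "abs (xs!(k+1)) \<le> int n" using sp_nth_range[OF sp k] by simp
        show False
        proof (cases "0 < xs!k")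
          case True
          with B have b: "xs!(k+1) = xs!k + 1" by (auto simp: bd_def)
          have "1 \<le> xs!k \<and> xs!k \<le> int n - 1" using True b r1 by simp
          from H[rule_format, OF this] b show False by simp
        next
          case False
          with B have b: "xs!k < 0" "xs!(k+1) = xs!k - 1" by (auto simp: bd_def)
          have "1 \<le> - xs!k \<and> - xs!k \<le> int n - 1" using b r1 by simp
          from H[rule_format, OF this] b show False by simp
        qed
      qed
    next
      assume nb: "\<not> bd (xs!k) (xs!(k+1))"
      show "\<forall>i::int. 1 \<le> i \<and> i \<le> int n - 1 \<longrightarrow>
         \<not> (xs ! k = i \<and> xs ! (k+1) = i + 1) \<and> \<not> (xs ! k = - i \<and> xs ! (k+1) = - (i + 1))"
        using nb by (auto simp: bd_def)
    qed
    show ?thesis using E1 E2 by auto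
  qed
  then show ?thesis unfolding rel_derangements_B_def by auto
qed


lemma bd_abs: "bd a b \<Longrightarrow> abs b = abs a + 1"
  by (auto simp: bd_def)

definition ins :: "nat \<Rightarrow> int \<Rightarrow> int list \<Rightarrow> int list" where
  "ins p x w = take p w @ x # drop p w"

lemma length_ins: "length (ins p x w) = Suc (length w)"
  unfolding ins_def by simp

lemma map_ins: "map f (ins p x w) = ins p (f x) (map f w)"
  unfolding ins_def by (simp add: take_map drop_map)

lemma set_ins: "set (ins p x w) = insert x (set w)"
proof -
  have "set w = set (take p w) \<union> set (drop p w)"
    by (metis append_take_drop_id set_append)
  then show ?thesis unfolding ins_def by auto
qed

lemma distinct_ins: "distinct (ins p x w) \<longleftrightarrow> distinct (x # w)"
proof -
  have e: "set w = set (take p w) \<union> set (drop p w)"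
    by (metis append_take_drop_id set_append)
  have "distinct (x # w) \<longleftrightarrow> distinct (x # (take p w @ drop p w))" by simp
  then show ?thesis unfolding ins_def using e by (auto simp del: append_take_drop_id)
qed

lemma sgn_cases: "s \<in> {1, -1::int} \<Longrightarrow> abs (s * x) = abs x"
  by (auto simp: abs_mult)

lemma ins_sp:
  assumes w: "w \<in> signed_perms m" and s: "s \<in> {1, -1::int}"
  shows "ins p (s * int (Suc m)) w \<in> signed_perms (Suc m)"
proof -
  have a: "abs (s * int (Suc m)) = int (Suc m)" using s by auto
  have L: "length w = m" and D: "distinct (map abs w)" and S: "set (map abs w) = {1..int m}"
    using w by (auto simp: sp_iff)
  have "int (Suc m) \<notin> set (map abs w)" using S by auto
  then have "distinct (map abs (ins p (s * int (Suc m)) w))"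
    using D a by (simp add: map_ins distinct_ins)
  moreover have "set (map abs (ins p (s * int (Suc m)) w)) = {1..int (Suc m)}"
    using S a by (auto simp: map_ins set_ins)
  ultimately show ?thesis using L by (simp add: sp_iff length_ins)
qed

lemma ins_surj:
  assumes pi: "pi \<in> signed_perms (Suc m)"
  shows "\<exists>w p s. w \<in> signed_perms m \<and> p \<le> m \<and> s \<in> {1, -1::int} \<and> pi = ins p (s * int (Suc m)) w"
proof -
  obtain p where p: "p < Suc m" "abs (pi!p) = int (Suc m)"
    using sp_exists[OF pi, of "int (Suc m)"] by auto
  define s where "s = sgn (pi!p)"
  have s: "s \<in> {1, -1}" and ps: "pi!p = s * int (Suc m)"
    using p(2) unfolding s_def by (auto simp: sgn_if abs_if split: if_splits)
  define w where "w = take p pi @ drop (Suc p) pi"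
  have L: "length pi = Suc m" using pi by (simp add: sp_iff)
  have tw: "take p w = take p pi" "drop p w = drop (Suc p) pi"
    unfolding w_def using p L by auto
  have eq: "pi = ins p (s * int (Suc m)) w"
    unfolding ins_def tw ps[symmetric] using p L by (simp add: id_take_nth_drop[symmetric])
  have as: "abs (s * int (Suc m)) = int (Suc m)" using s by auto
  have ma: "map abs pi = ins p (int (Suc m)) (map abs w)"
    by (subst eq) (simp only: map_ins as)
  have D: "distinct (int (Suc m) # map abs w)"
    using pi ma distinct_ins by (metis sp_iff)
  have S: "insert (int (Suc m)) (set (map abs w)) = {1..int (Suc m)}"
    using pi ma set_ins by (metis sp_iff)
  have "set (map abs w) = {1..int m}"
  proof -
    have nin: "int (Suc m) \<notin> set (map abs w)" using D by simp
    have "set (map abs w) = {1..int (Suc m)} - {int (Suc m)}" using S nin by (metis Diff_insert_absorb)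
    also have "\<dots> = {1..int m}" by auto
    finally show ?thesis .
  qed
  moreover have "length w = m" unfolding w_def using p L by simp
  ultimately have "w \<in> signed_perms m" using D by (simp add: sp_iff)
  moreover have "p \<le> m" using p by simp
  ultimately show ?thesis using eq s by blast
qed

lemma nth_ins_self: "p \<le> length w \<Longrightarrow> ins p x w ! p = x"
  unfolding ins_def by (simp add: nth_append)

lemma nth_ins_before: "k < p \<Longrightarrow> p \<le> length w \<Longrightarrow> ins p x w ! k = w ! k"
  unfolding ins_def by (simp add: nth_append)

lemma ins_inj:
  assumes w: "w \<in> signed_perms m" and w': "w' \<in> signed_perms m"
    and p: "p \<le> m" and p': "p' \<le> m"
    and x: "abs x = int (Suc m)" and x': "abs x' = int (Suc m)"
    and eq: "ins p x w = ins p' x' w'"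
  shows "p = p' \<and> x = x' \<and> w = w'"
proof -
  have L: "length w = m" "length w' = m" using w w' by (auto simp: sp_iff)
  have pp: "p = p'"
  proof (rule ccontr)
    assume "p \<noteq> p'"
    then consider "p < p'" | "p' < p" by linarith
    then show False
    proof cases
      case 1
      have "ins p x w ! p = x" using p L by (simp add: nth_ins_self)
      moreover have "ins p' x' w' ! p = w' ! p" using 1 p' L by (simp add: nth_ins_before)
      moreover have "abs (w' ! p) \<le> int m" using sp_nth_range[OF w', of p] 1 p' by simp
      ultimately show False using eq x by simp
    next
      case 2
      have "ins p' x' w' ! p' = x'" using p' L by (simp add: nth_ins_self)
      moreover have "ins p x w ! p' = w ! p'" using 2 p L by (simp add: nth_ins_before)
      moreover have "abs (w ! p') \<le> int m" using sp_nth_range[OF w, of p'] 2 p by simp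
      ultimately show False using eq x' by simp
    qed
  qed
  have xx: "x = x'" using eq pp p p' L nth_ins_self by metis
  have "take p w = take p w' \<and> x # drop p w = x # drop p w'"
    using eq pp xx L p unfolding ins_def by (simp add: append_eq_append_conv)
  then have "w = w'" by (metis append_take_drop_id list.inject)
  with pp xx show ?thesis by simp
qed


lemma card_decomp_Q:
  "card {pi \<in> signed_perms (Suc m). P pi} =
   (\<Sum>w\<in>signed_perms m. card {q \<in> {..m} \<times> {1, -1::int}. P (ins (fst q) (snd q * int (Suc m)) w)})"
proof -
  define Phi where "Phi = (\<lambda>(w, q::nat \<times> int). ins (fst q) (snd q * int (Suc m)) w)"
  define Sg where "Sg = (SIGMA w:signed_perms m. {q \<in> {..m} \<times> {1, -1::int}. P (ins (fst q) (snd q * int (Suc m)) w)})"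
  have inj: "inj_on Phi Sg"
  proof (rule inj_onI)
    fix a b assume a: "a \<in> Sg" and b: "b \<in> Sg" and e: "Phi a = Phi b"
    obtain w p s where aa: "a = (w, (p, s))" by (cases a) auto
    obtain w' p' s' where bb: "b = (w', (p', s'))" by (cases b) auto
    have h: "w \<in> signed_perms m" "p \<le> m" "s \<in> {1, -1}" "w' \<in> signed_perms m" "p' \<le> m" "s' \<in> {1, -1}"
      using a b aa bb by (auto simp: Sg_def)
    have x: "abs (s * int (Suc m)) = int (Suc m)" "abs (s' * int (Suc m)) = int (Suc m)"
      using h by auto
    have "ins p (s * int (Suc m)) w = ins p' (s' * int (Suc m)) w'" using e aa bb by (simp add: Phi_def)
    from ins_inj[OF h(1) h(4) h(2) h(5) x this] have "p = p'" "s = s'" "w = w'" by auto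
    then show "a = b" using aa bb by simp
  qed
  have img: "Phi ` Sg = {pi \<in> signed_perms (Suc m). P pi}"
  proof
    show "Phi ` Sg \<subseteq> {pi \<in> signed_perms (Suc m). P pi}"
    proof
      fix pi assume "pi \<in> Phi ` Sg"
      then obtain w p s where a: "(w, (p, s)) \<in> Sg" "pi = Phi (w, (p, s))" by auto
      hence "w \<in> signed_perms m" "s \<in> {1, -1}" "P pi" by (auto simp: Sg_def Phi_def)
      moreover have "pi = ins p (s * int (Suc m)) w" using a by (simp add: Phi_def)
      ultimately show "pi \<in> {pi \<in> signed_perms (Suc m). P pi}" using ins_sp by auto
    qed
  next
    show "{pi \<in> signed_perms (Suc m). P pi} \<subseteq> Phi ` Sg"
    proof
      fix pi assume "pi \<in> {pi \<in> signed_perms (Suc m). P pi}"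
      hence pi: "pi \<in> signed_perms (Suc m)" "P pi" by auto
      obtain w p s where h: "w \<in> signed_perms m" "p \<le> m" "s \<in> {1, -1::int}" "pi = ins p (s * int (Suc m)) w"
        using ins_surj[OF pi(1)] by blast
      have "(w, (p, s)) \<in> Sg" using h pi(2) by (auto simp: Sg_def)
      moreover have "Phi (w, (p, s)) = pi" using h by (simp add: Phi_def)
      ultimately show "pi \<in> Phi ` Sg" by (metis image_eqI)
    qed
  qed
  have "card {pi \<in> signed_perms (Suc m). P pi} = card Sg"
    using card_image[OF inj] img by simp
  also have "\<dots> = (\<Sum>w\<in>signed_perms m. card {q \<in> {..m} \<times> {1, -1::int}. P (ins (fst q) (snd q * int (Suc m)) w)})"
    unfolding Sg_def by (rule card_SigmaI) (auto simp: finite_sp)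
  finally show ?thesis .
qed

lemma bonds_ins:
  assumes w: "w \<in> signed_perms m" and p: "p \<le> m" and x: "abs x = int (Suc m)"
  shows "int (bonds (ins p x w)) = int (bonds w) - (if p \<in> bset w then 1 else 0)
           + (if 0 < p \<and> bd (w!(p-1)) x then 1 else 0)"
proof -
  have L: "length w = m" using w by (simp add: sp_iff)
  have nb: "\<not> bd x (hd (drop p w))" if "p < m"
  proof
    assume "bd x (hd (drop p w))"
    hence "abs (w!p) = int (Suc m) + 1" using bd_abs x that L by (simp add: hd_drop_conv_nth)
    moreover have "abs (w!p) \<le> int m" using sp_nth_range[OF w that] by simp
    ultimately show False by simp
  qed
  have t: "take p w \<noteq> [] \<longleftrightarrow> 0 < p" using p L by auto
  have d: "drop p w \<noteq> [] \<longleftrightarrow> p < m" using p L by auto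
  have lt: "last (take p w) = w!(p-1)" if "0 < p" using that p L by (subst last_conv_nth) (auto simp: min_def)
  have hd: "hd (drop p w) = w!p" if "p < m" using that L by (simp add: hd_drop_conv_nth)
  have e1: "bonds (ins p x w) = bonds (take p w) + bonds (drop p w)
      + (if drop p w \<noteq> [] \<and> bd x (hd (drop p w)) then 1 else 0)
      + (if take p w \<noteq> [] \<and> bd (last (take p w)) x then 1 else 0)"
    unfolding ins_def by (simp add: bonds_append bonds_Cons)
  have e2: "bonds w = bonds (take p w) + bonds (drop p w)
      + (if take p w \<noteq> [] \<and> drop p w \<noteq> [] \<and> bd (last (take p w)) (hd (drop p w)) then 1 else 0)"
    by (metis append_take_drop_id bonds_append)
  have bs: "p \<in> bset w \<longleftrightarrow> 0 < p \<and> p < m \<and> bd (w!(p-1)) (w!p)" by (simp add: bset_def L)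
  define A where "A = bonds (take p w) + bonds (drop p w)"
  have X: "\<not> (drop p w \<noteq> [] \<and> bd x (hd (drop p w)))" using nb d by blast
  have e1': "bonds (ins p x w) = A + (if take p w \<noteq> [] \<and> bd (last (take p w)) x then 1 else 0)"
    using e1 X unfolding A_def by simp
  have e2': "bonds w = A + (if take p w \<noteq> [] \<and> drop p w \<noteq> [] \<and> bd (last (take p w)) (hd (drop p w)) then 1 else 0)"
    using e2 unfolding A_def by simp
  show ?thesis
  proof (cases "0 < p")
    case False
    then have "p \<notin> bset w" using bs by simp
    then show ?thesis using e1' e2' t False by simp
  next
    case True
    show ?thesis
    proof (cases "p < m")
      case True2: True
      have "(p \<in> bset w) = bd (w!(p-1)) (w!p)" using bs True True2 by simp
      then show ?thesis using e1' e2' t d lt[OF True] hd[OF True2] True True2 by simp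
    next
      case False
      then have "p \<notin> bset w" using bs by simp
      then show ?thesis using e1' e2' t d lt[OF True] True False by simp
    qed
  qed
qed

lemma count3:
  fixes f :: "'a \<Rightarrow> int"
  assumes fin: "finite P" and CP: "C \<subseteq> P" and NP: "N \<subseteq> P" and CN: "C \<inter> N = {}"
    and f: "\<And>q. q \<in> P \<Longrightarrow> f q = b - (if q \<in> C then 1 else 0) + (if q \<in> N then 1 else 0)"
  shows "int (card {q \<in> P. f q = j}) = (if b = j + 1 then int (card C) else 0) + (if b = j - 1 then int (card N) else 0)
      + (if b = j then int (card P) - int (card C) - int (card N) else 0)"
proof -
  have fC: "finite C" "finite N" using fin CP NP finite_subset by auto
  have f1: "f q = b - 1" if "q \<in> C" for q
  proof -
    have "q \<in> P" "q \<notin> N" using that CP CN by auto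
    then show ?thesis using f[of q] that by simp
  qed
  have f2: "f q = b + 1" if "q \<in> N" for q
  proof -
    have "q \<in> P" "q \<notin> C" using that NP CN by auto
    then show ?thesis using f[of q] that by simp
  qed
  have f3: "f q = b" if "q \<in> P" "q \<notin> C" "q \<notin> N" for q
    using f[of q] that by simp
  have v: "f q = j \<longleftrightarrow> (q \<in> C \<and> j = b - 1) \<or> (q \<in> N \<and> j = b + 1) \<or> (q \<notin> C \<and> q \<notin> N \<and> j = b)"
    if "q \<in> P" for q
  proof (cases "q \<in> C")
    case True
    then have "q \<notin> N" using CN by blast
    then show ?thesis using f1[OF True] True by linarith
  next
    case False
    show ?thesis
    proof (cases "q \<in> N")
      case True
      then show ?thesis using f2[OF True] False by linarith
    next
      case F2: False
      then show ?thesis using f3[OF that False F2] False by linarith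
    qed
  qed
  have S: "{q \<in> P. f q = j} = (if j = b - 1 then C else {}) \<union> (if j = b + 1 then N else {})
      \<union> (if j = b then P - (C \<union> N) else {})"
    using v CP NP by (auto split: if_splits)
  have c3: "card (P - (C \<union> N)) = card P - card (C \<union> N)"
    using CP NP fin by (simp add: card_Diff_subset fC)
  have c4: "card (C \<union> N) = card C + card N" using CN fC by (simp add: card_Un_disjoint)
  have c5: "card (C \<union> N) \<le> card P"
    using CP NP fin by (simp add: card_mono)
  consider "j = b - 1" | "j = b + 1" | "j = b" | "j \<noteq> b - 1 \<and> j \<noteq> b + 1 \<and> j \<noteq> b" by blast
  then show ?thesis
  proof cases
    case 1
    then have "{q \<in> P. f q = j} = C" using S by simp
    then show ?thesis using 1 by simp
  next
    case 2
    then have "{q \<in> P. f q = j} = N" using S by simp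
    then show ?thesis using 2 by simp
  next
    case 3
    then have "{q \<in> P. f q = j} = P - (C \<union> N)" using S by simp
    then show ?thesis using 3 c3 c4 c5 by simp
  next
    case 4
    then have "{q \<in> P. f q = j} = {}" using S by simp
    then show ?thesis using 4 by (simp only: card.empty) simp
  qed
qed


lemma card_pm1: "card {1, -1::int} = 2" by simp

lemma Q_inner:
  assumes w: "w \<in> signed_perms m" and m: "1 \<le> m"
  shows "int (card {q \<in> {..m} \<times> {1,-1::int}. int (bonds (ins (fst q) (snd q * int (Suc m)) w)) = j}) =
   (if int (bonds w) = j + 1 then 2 * (j + 1) else 0) + (if int (bonds w) = j - 1 then 1 else 0)
   + (if int (bonds w) = j then 2 * int (Suc m) - 2 * j - 1 else 0)"
proof -
  have L: "length w = m" using w by (simp add: sp_iff)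
  obtain i where i: "i < m" "abs (w!i) = int m" using sp_exists[OF w, of "int m"] m by auto
  define s0 where "s0 = sgn (w!i)"
  have s0: "s0 \<in> {1, -1}" "w!i = s0 * int m" using i m unfolding s0_def by (auto simp: sgn_if abs_if split: if_splits)
  have key: "(0 < p \<and> bd (w!(p-1)) (s * int (Suc m))) \<longleftrightarrow> (p = Suc i \<and> s = s0)"
    if p: "p \<le> m" and s: "s \<in> {1, -1}" for p s
  proof
    assume h: "0 < p \<and> bd (w!(p-1)) (s * int (Suc m))"
    have pl: "p - 1 < m" using h p by linarith
    have "abs (s * int (Suc m)) = abs (w!(p-1)) + 1" using bd_abs h by blast
    hence "abs (w!(p-1)) = int m" using s by auto
    hence "p - 1 = i" using sp_nth_inj[OF w pl i(1)] i(2) by simp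
    moreover have "0 < p" using h by simp
    ultimately have pi: "p = Suc i" by linarith
    have "s = s0"
    proof (cases "0 < w!i")
      case True
      hence "s * int (Suc m) = w!i + 1" using h pi by (auto simp: bd_def)
      hence "s = 1" using s True by auto
      moreover have "s0 = 1" using True by (simp add: s0_def)
      ultimately show ?thesis by simp
    next
      case False
      hence "w!i < 0" using i m by auto
      hence "s * int (Suc m) = w!i - 1" "w!i < 0" using h pi by (auto simp: bd_def)
      hence "s = -1" using s by auto
      moreover have "s0 = -1" using \<open>w!i < 0\<close> by (simp add: s0_def)
      ultimately show ?thesis by simp
    qed
    with pi show "p = Suc i \<and> s = s0" by simp
  next
    assume h: "p = Suc i \<and> s = s0"
    show "0 < p \<and> bd (w!(p-1)) (s * int (Suc m))"
      using h s0 m by (auto simp: bd_def)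
  qed
  define P where "P = {..m} \<times> {1,-1::int}"
  define C where "C = bset w \<times> {1,-1::int}"
  define N where "N = {(Suc i, s0)}"
  have bsub: "bset w \<subseteq> {..m}" by (auto simp: bset_def L)
  have CP: "C \<subseteq> P" using bsub by (auto simp: C_def P_def)
  have NP: "N \<subseteq> P" using i s0 by (auto simp: N_def P_def)
  have CN: "C \<inter> N = {}"
  proof -
    have "Suc i \<notin> bset w"
    proof
      assume "Suc i \<in> bset w"
      hence "Suc i < m" "bd (w!i) (w!(Suc i))" by (auto simp: bset_def L)
      hence "abs (w!(Suc i)) = int m + 1" using bd_abs i by fastforce
      moreover have "abs (w!(Suc i)) \<le> int m" using sp_nth_range[OF w \<open>Suc i < m\<close>] by simp
      ultimately show False by simp
    qed
    then show ?thesis by (auto simp: C_def N_def)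
  qed
  have f: "int (bonds (ins (fst q) (snd q * int (Suc m)) w)) = int (bonds w) - (if q \<in> C then 1 else 0) + (if q \<in> N then 1 else 0)"
    if q: "q \<in> P" for q
  proof -
    obtain p s where qq: "q = (p, s)" by (cases q)
    have ps: "p \<le> m" "s \<in> {1, -1}" using q qq by (auto simp: P_def)
    have x: "abs (s * int (Suc m)) = int (Suc m)" using ps by auto
    have "int (bonds (ins p (s * int (Suc m)) w)) = int (bonds w) - (if p \<in> bset w then 1 else 0)
           + (if 0 < p \<and> bd (w!(p-1)) (s * int (Suc m)) then 1 else 0)"
      by (rule bonds_ins[OF w ps(1) x])
    moreover have "(p \<in> bset w) = ((p, s) \<in> C)" using ps by (auto simp: C_def)
    moreover have "(0 < p \<and> bd (w!(p-1)) (s * int (Suc m))) = ((p, s) \<in> N)"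
      using key[OF ps] by (simp add: N_def)
    ultimately show ?thesis using qq by simp
  qed
  have fin: "finite P" by (simp add: P_def)
  have cC: "card C = 2 * bonds w" by (simp add: C_def card_cartesian_product bonds_bset)
  have cN: "card N = 1" by (simp add: N_def)
  have cP: "card P = 2 * Suc m" by (simp add: P_def card_cartesian_product)
  have "int (card {q \<in> P. int (bonds (ins (fst q) (snd q * int (Suc m)) w)) = j}) =
      (if int (bonds w) = j + 1 then int (card C) else 0) + (if int (bonds w) = j - 1 then int (card N) else 0)
      + (if int (bonds w) = j then int (card P) - int (card C) - int (card N) else 0)"
    by (rule count3[OF fin CP NP CN f])
  then show ?thesis unfolding P_def[symmetric] using cC cN cP by auto
qed


definition Qc :: "int \<Rightarrow> nat \<Rightarrow> int" where
  "Qc j n = int (card {w \<in> signed_perms n. int (bonds w) = j})"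

lemma sum_if_const:
  fixes c :: int
  assumes "finite A"
  shows "(\<Sum>x\<in>A. if P x then c else 0) = c * int (card {x\<in>A. P x})"
proof -
  have "(\<Sum>x\<in>A. if P x then c else 0) = (\<Sum>x\<in>{x\<in>A. P x}. c)"
    using sum.inter_filter[OF assms, of "\<lambda>_. c" P] by simp
  then show ?thesis by simp
qed

lemma QR:
  assumes m: "1 \<le> m"
  shows "Qc j (Suc m) = 2 * (j + 1) * Qc (j + 1) m + Qc (j - 1) m + (2 * int (Suc m) - 2 * j - 1) * Qc j m"
proof -
  have "Qc j (Suc m) = int (\<Sum>w\<in>signed_perms m. card {q \<in> {..m} \<times> {1, -1::int}. int (bonds (ins (fst q) (snd q * int (Suc m)) w)) = j})"
    unfolding Qc_def by (subst card_decomp_Q) simp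
  also have "\<dots> = (\<Sum>w\<in>signed_perms m. int (card {q \<in> {..m} \<times> {1, -1::int}. int (bonds (ins (fst q) (snd q * int (Suc m)) w)) = j}))"
    by (simp add: of_nat_sum)
  also have "\<dots> = (\<Sum>w\<in>signed_perms m. (if int (bonds w) = j + 1 then 2 * (j + 1) else 0) + (if int (bonds w) = j - 1 then 1 else 0)
   + (if int (bonds w) = j then 2 * int (Suc m) - 2 * j - 1 else 0))"
    by (rule sum.cong[OF refl]) (rule Q_inner[OF _ m], assumption)
  also have "\<dots> = (\<Sum>w\<in>signed_perms m. if int (bonds w) = j + 1 then 2 * (j + 1) else 0)
     + (\<Sum>w\<in>signed_perms m. if int (bonds w) = j - 1 then 1 else 0)
     + (\<Sum>w\<in>signed_perms m. if int (bonds w) = j then 2 * int (Suc m) - 2 * j - 1 else 0)"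
    by (simp add: sum.distrib)
  also have "\<dots> = 2 * (j + 1) * Qc (j + 1) m + Qc (j - 1) m + (2 * int (Suc m) - 2 * j - 1) * Qc j m"
    unfolding Qc_def by (simp only: sum_if_const[OF finite_sp])
  finally show ?thesis .
qed


definition ins2 :: "nat \<Rightarrow> int list \<Rightarrow> nat \<Rightarrow> int \<Rightarrow> int list" where
  "ins2 m w p s = (if p = m then w @ [s * int (Suc m)] else w[p := s * int (Suc m)] @ [s * w!p])"

lemma ins2_sp:
  assumes w: "w \<in> signed_perms m" and p: "p \<le> m" and s: "s \<in> {1, -1::int}"
  shows "ins2 m w p s \<in> signed_perms (Suc m)"
proof -
  have L: "length w = m" and D: "distinct (map abs w)" and S: "set (map abs w) = {1..int m}"
    using w by (auto simp: sp_iff)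
  have nin: "int (Suc m) \<notin> set (map abs w)" using S by auto
  have as: "abs (s * y) = abs y" for y using s by (auto simp: abs_mult)
  show ?thesis
  proof (cases "p = m")
    case True
    have "map abs (ins2 m w p s) = map abs w @ [int (Suc m)]" using True as by (simp add: ins2_def)
    moreover have "{1..int m} \<union> {int (Suc m)} = {1..int (Suc m)}" by auto
    ultimately have ma: "map abs (ins2 m w p s) = map abs w @ [int (Suc m)]"
      and U: "{1..int m} \<union> {int (Suc m)} = {1..int (Suc m)}" by blast+
    have "distinct (map abs (ins2 m w p s))" using ma D nin by simp
    moreover have "set (map abs (ins2 m w p s)) = {1..int (Suc m)}" using ma S U by (simp only: set_append list.set)
    moreover have "length (ins2 m w p s) = Suc m" using L True by (simp add: ins2_def)
    ultimately show ?thesis by (simp add: sp_iff)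
  next
    case False
    hence pm: "p < m" using p by simp
    define A where "A = map abs w"
    have Ap: "A!p = abs (w!p)" using pm L by (simp add: A_def)
    have ar: "1 \<le> abs (w!p) \<and> abs (w!p) \<le> int m" using sp_nth_range[OF w pm] .
    have ma: "map abs (ins2 m w p s) = A[p := int (Suc m)] @ [abs (w!p)]"
      using False as by (simp add: ins2_def A_def map_update)
    have d1: "distinct (A[p := int (Suc m)])"
      using D nin by (intro distinct_list_update) (auto simp: A_def)
    have s1: "set (A[p := int (Suc m)]) = insert (int (Suc m)) ({1..int m} - {abs (w!p)})"
      using set_update_distinct[of A p "int (Suc m)"] D S pm L Ap by (simp add: A_def)
    have "abs (w!p) \<notin> set (A[p := int (Suc m)])" using s1 ar by auto
    hence "distinct (map abs (ins2 m w p s))" using ma d1 by simp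
    moreover have "set (map abs (ins2 m w p s)) = {1..int (Suc m)}"
    proof -
      have "set (map abs (ins2 m w p s)) = insert (int (Suc m)) ({1..int m} - {abs (w!p)}) \<union> {abs (w!p)}"
        using ma s1 by simp
      also have "\<dots> = {1..int (Suc m)}" using ar by auto
      finally show ?thesis .
    qed
    moreover have "length (ins2 m w p s) = Suc m" using L False by (simp add: ins2_def)
    ultimately show ?thesis by (simp add: sp_iff)
  qed
qed


lemma ins2_surj:
  assumes pi: "pi \<in> signed_perms (Suc m)"
  shows "\<exists>w p s. w \<in> signed_perms m \<and> p \<le> m \<and> s \<in> {1, -1::int} \<and> pi = ins2 m w p s"
proof -
  have L: "length pi = Suc m" and D: "distinct (map abs pi)" and S: "set (map abs pi) = {1..int (Suc m)}"
    using pi by (auto simp: sp_iff)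
  define v where "v = pi ! m"
  have pisplit: "pi = take m pi @ [v]"
  proof -
    have "take (Suc m) pi = take m pi @ [pi!m]" by (rule take_Suc_conv_app_nth) (simp add: L)
    moreover have "take (Suc m) pi = pi" by (simp add: L)
    ultimately show ?thesis by (simp add: v_def)
  qed
  define A where "A = map abs (take m pi)"
  have mapsplit: "map abs pi = A @ [abs v]" unfolding A_def by (subst pisplit) simp
  have DA: "distinct A" and vA: "abs v \<notin> set A" using D mapsplit by auto
  have "insert (abs v) (set A) = {1..int (Suc m)}" using S mapsplit by simp
  hence SA: "set A = {1..int (Suc m)} - {abs v}" using vA by (metis Diff_insert_absorb)
  have LA: "length A = m" using L by (simp add: A_def)
  have vr: "1 \<le> abs v \<and> abs v \<le> int (Suc m)" using sp_nth_range[OF pi, of m] by (simp add: v_def)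
  show ?thesis
  proof (cases "abs v = int (Suc m)")
    case True
    define s where "s = sgn v"
    have s: "s \<in> {1, -1}" "v = s * int (Suc m)" using True unfolding s_def by (auto simp: sgn_if abs_if split: if_splits)
    have "{1..int (Suc m)} - {int (Suc m)} = {1..int m}" by auto
    hence "set A = {1..int m}" using SA True by simp
    hence "take m pi \<in> signed_perms m" using DA LA by (simp add: sp_iff A_def)
    moreover have "pi = ins2 m (take m pi) m s" using pisplit s by (simp add: ins2_def)
    ultimately show ?thesis using s by blast
  next
    case False
    obtain p where p: "p < Suc m" "abs (pi!p) = int (Suc m)"
      using sp_exists[OF pi, of "int (Suc m)"] by auto
    have pm: "p < m" using p False by (cases "p = m") (auto simp: v_def)
    define s where "s = sgn (pi!p)"
    have s: "s \<in> {1, -1}" "pi!p = s * int (Suc m)" using p(2) unfolding s_def by (auto simp: sgn_if abs_if split: if_splits)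
    define w where "w = (take m pi)[p := s * v]"
    have Lw: "length w = m" using L by (simp add: w_def)
    have wp: "w!p = s * v" using pm L by (simp add: w_def)
    have ss: "s * s = 1" using s by auto
    have "ins2 m w p s = (take m pi)[p := s * int (Suc m)] @ [s * (s * v)]"
      using pm wp by (simp add: ins2_def w_def)
    also have "(take m pi)[p := s * int (Suc m)] = take m pi"
    proof -
      have "(take m pi)!p = s * int (Suc m)" using s pm by simp
      then show ?thesis by (metis list_update_id)
    qed
    also have "s * (s * v) = v" using ss by (simp add: mult.assoc[symmetric])
    finally have X: "ins2 m w p s = take m pi @ [v]" .
    have eq: "ins2 m w p s = pi" using X pisplit by metis
    have as: "abs (s * v) = abs v" using s by (auto simp: abs_mult)
    have mw: "map abs w = A[p := abs v]" using as by (simp add: w_def A_def map_update)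
    have Ap: "A!p = int (Suc m)" using pm L p by (simp add: A_def)
    have "distinct (A[p := abs v])" using DA vA by (intro distinct_list_update) auto
    moreover have "set (A[p := abs v]) = {1..int m}"
    proof -
      have "set (A[p := abs v]) = insert (abs v) (set A - {int (Suc m)})"
        using set_update_distinct[OF DA, of p "abs v"] pm LA Ap by simp
      also have "\<dots> = {1..int m}"
      proof -
        have "\<forall>a. 1 \<le> a \<and> a \<le> int (Suc m) \<and> a \<noteq> int (Suc m) \<longrightarrow> insert a ({1..int (Suc m)} - {a} - {int (Suc m)}) = {1..int m}"
          by auto
        then show ?thesis using SA vr False by simp
      qed
      finally show ?thesis .
    qed
    ultimately have "w \<in> signed_perms m" using Lw mw by (simp add: sp_iff)
    moreover have "p \<le> m" using pm by simp
    ultimately show ?thesis using eq s by blast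
  qed
qed


lemma ins2_inj:
  assumes w: "w \<in> signed_perms m" and w': "w' \<in> signed_perms m"
    and p: "p \<le> m" and p': "p' \<le> m" and s: "s \<in> {1, -1::int}" and s': "s' \<in> {1, -1::int}"
    and eq: "ins2 m w p s = ins2 m w' p' s'"
  shows "p = p' \<and> s = s' \<and> w = w'"
proof -
  have L: "length w = m" "length w' = m" using w w' by (auto simp: sp_iff)
  have as: "abs (s * int (Suc m)) = int (Suc m)" "abs (s' * int (Suc m)) = int (Suc m)" using s s' by auto
  have lastabs: "abs (last (ins2 m u q t)) = int (Suc m) \<longleftrightarrow> q = m"
    if "u \<in> signed_perms m" "q \<le> m" "t \<in> {1, -1::int}" for u q t
  proof (cases "q = m")
    case True then show ?thesis using that by (auto simp: ins2_def abs_mult)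
  next
    case False
    hence "q < m" using that by simp
    hence "abs (u!q) \<le> int m" using sp_nth_range[OF that(1)] by simp
    moreover have "abs (t * u!q) = abs (u!q)" using that(3) by (auto simp: abs_mult)
    ultimately show ?thesis using False by (simp add: ins2_def)
  qed
  have pm: "p = m \<longleftrightarrow> p' = m" using lastabs[OF w p s] lastabs[OF w' p' s'] eq by simp
  show ?thesis
  proof (cases "p = m")
    case True
    hence "w @ [s * int (Suc m)] = w' @ [s' * int (Suc m)]" using eq pm by (simp add: ins2_def)
    hence "w = w'" "s * int (Suc m) = s' * int (Suc m)" by auto
    hence "s = s'" by simp
    then show ?thesis using True pm \<open>w = w'\<close> by simp
  next
    case False
    hence pl: "p < m" "p' < m" using p p' pm by auto
    have e2: "w[p := s * int (Suc m)] @ [s * w!p] = w'[p' := s' * int (Suc m)] @ [s' * w'!p']"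
      using eq pl by (simp add: ins2_def)
    hence e3: "w[p := s * int (Suc m)] = w'[p' := s' * int (Suc m)]" and e4: "s * w!p = s' * w'!p'" by auto
    have pp: "p = p'"
    proof (rule ccontr)
      assume ne: "p \<noteq> p'"
      have "w[p := s * int (Suc m)] ! p = s * int (Suc m)" using pl L by simp
      moreover have "w'[p' := s' * int (Suc m)] ! p = w'!p" using ne by simp
      moreover have "abs (w'!p) \<le> int m" using sp_nth_range[OF w' pl(1)] by simp
      ultimately show False using e3 as by simp
    qed
    have "w[p := s * int (Suc m)] ! p = w'[p' := s' * int (Suc m)] ! p" using e3 by simp
    hence "s * int (Suc m) = s' * int (Suc m)" using pp pl L by simp
    hence ss: "s = s'" by simp
    have "s \<noteq> 0" using s by auto
    hence wp: "w!p = w'!p" using e4 ss pp by simp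
    have "w = w'"
    proof (rule nth_equalityI)
      show "length w = length w'" using L by simp
    next
      fix k assume k: "k < length w"
      show "w!k = w'!k"
      proof (cases "k = p")
        case True then show ?thesis using wp by simp
      next
        case False
        have "w[p := s * int (Suc m)] ! k = w'[p' := s' * int (Suc m)] ! k" using e3 by simp
        then show ?thesis using False pp by simp
      qed
    qed
    then show ?thesis using pp ss by simp
  qed
qed

lemma card_decomp_F:
  "card {pi \<in> signed_perms (Suc m). P pi} =
   (\<Sum>w\<in>signed_perms m. card {q \<in> {..m} \<times> {1, -1::int}. P (ins2 m w (fst q) (snd q))})"
proof -
  define Phi where "Phi = (\<lambda>(w, q::nat \<times> int). ins2 m w (fst q) (snd q))"
  define Sg where "Sg = (SIGMA w:signed_perms m. {q \<in> {..m} \<times> {1, -1::int}. P (ins2 m w (fst q) (snd q))})"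
  have inj: "inj_on Phi Sg"
  proof (rule inj_onI)
    fix a b assume a: "a \<in> Sg" and b: "b \<in> Sg" and e: "Phi a = Phi b"
    obtain w p s where aa: "a = (w, (p, s))" by (cases a) auto
    obtain w' p' s' where bb: "b = (w', (p', s'))" by (cases b) auto
    have h: "w \<in> signed_perms m" "p \<le> m" "s \<in> {1, -1}" "w' \<in> signed_perms m" "p' \<le> m" "s' \<in> {1, -1}"
      using a b aa bb by (auto simp: Sg_def)
    have "ins2 m w p s = ins2 m w' p' s'" using e aa bb by (simp add: Phi_def)
    from ins2_inj[OF h(1) h(4) h(2) h(5) h(3) h(6) this] have "p = p'" "s = s'" "w = w'" by auto
    then show "a = b" using aa bb by simp
  qed
  have img: "Phi ` Sg = {pi \<in> signed_perms (Suc m). P pi}"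
  proof
    show "Phi ` Sg \<subseteq> {pi \<in> signed_perms (Suc m). P pi}"
    proof
      fix pi assume "pi \<in> Phi ` Sg"
      then obtain w p s where a: "(w, (p, s)) \<in> Sg" "pi = Phi (w, (p, s))" by auto
      hence "w \<in> signed_perms m" "p \<le> m" "s \<in> {1, -1}" "P pi" by (auto simp: Sg_def Phi_def)
      moreover have "pi = ins2 m w p s" using a by (simp add: Phi_def)
      ultimately show "pi \<in> {pi \<in> signed_perms (Suc m). P pi}" using ins2_sp by auto
    qed
  next
    show "{pi \<in> signed_perms (Suc m). P pi} \<subseteq> Phi ` Sg"
    proof
      fix pi assume "pi \<in> {pi \<in> signed_perms (Suc m). P pi}"
      hence pi: "pi \<in> signed_perms (Suc m)" "P pi" by auto
      obtain w p s where h: "w \<in> signed_perms m" "p \<le> m" "s \<in> {1, -1::int}" "pi = ins2 m w p s"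
        using ins2_surj[OF pi(1)] by blast
      have "(w, (p, s)) \<in> Sg" using h pi(2) by (auto simp: Sg_def)
      moreover have "Phi (w, (p, s)) = pi" using h by (simp add: Phi_def)
      ultimately show "pi \<in> Phi ` Sg" by (metis image_eqI)
    qed
  qed
  have "card {pi \<in> signed_perms (Suc m). P pi} = card Sg"
    using card_image[OF inj] img by simp
  also have "\<dots> = (\<Sum>w\<in>signed_perms m. card {q \<in> {..m} \<times> {1, -1::int}. P (ins2 m w (fst q) (snd q))})"
    unfolding Sg_def by (rule card_SigmaI) (auto simp: finite_sp)
  finally show ?thesis .
qed

lemma fset_snoc: "fset (xs @ [y]) = fset xs \<union> (if y = int (length xs) + 1 then {length xs} else {})"
  by (auto simp: fset_def nth_append less_Suc_eq)

lemma fset_update: "p < length xs \<Longrightarrow> fset (xs[p := v]) = (fset xs - {p}) \<union> (if v = int p + 1 then {p} else {})"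
  by (auto simp: fset_def nth_list_update)

lemma fset_sub: "fset xs \<subseteq> {..<length xs}"
  by (auto simp: fset_def)

lemma fixc_ins2:
  assumes w: "w \<in> signed_perms m" and p: "p \<le> m" and s: "s \<in> {1, -1::int}"
  shows "int (fixc (ins2 m w p s)) = int (fixc w) - (if p \<in> fset w then 1 else 0) + (if p = m \<and> s = 1 then 1 else 0)"
proof -
  have L: "length w = m" using w by (simp add: sp_iff)
  show ?thesis
  proof (cases "p = m")
    case True
    have nm: "m \<notin> fset w" using fset_sub[of w] L by auto
    have "(s * int (Suc m) = int m + 1) = (s = 1)" using s by auto
    hence "fset (ins2 m w p s) = fset w \<union> (if s = 1 then {m} else {})"
      using True L by (simp add: ins2_def fset_snoc)
    then show ?thesis using nm True finite_fset[of w] by (simp add: fixc_def)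
  next
    case False
    hence pm: "p < m" using p by simp
    have a1: "s * w!p \<noteq> int (length (w[p := s * int (Suc m)])) + 1"
    proof -
      have "abs (w!p) \<le> int m" using sp_nth_range[OF w pm] by simp
      moreover have "abs (s * w!p) = abs (w!p)" using s by (auto simp: abs_mult)
      ultimately show ?thesis using L by auto
    qed
    have a2: "s * int (Suc m) \<noteq> int p + 1" using s pm by auto
    have "fset (ins2 m w p s) = fset w - {p}"
      using False a1 a2 pm L by (simp add: ins2_def fset_snoc fset_update)
    show ?thesis
    proof (cases "p \<in> fset w")
      case True
      have "0 < card (fset w)" using finite_fset[of w] True by (auto simp: card_gt_0_iff)
      moreover have "card (fset w - {p}) = card (fset w) - 1" using True finite_fset[of w] by simp
      ultimately show ?thesis using \<open>fset (ins2 m w p s) = fset w - {p}\<close> True False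
        unfolding fixc_def by (simp add: of_nat_diff)
    next
      case F2: False
      then show ?thesis using \<open>fset (ins2 m w p s) = fset w - {p}\<close> False unfolding fixc_def by simp
    qed
  qed
qed

lemma F_inner:
  assumes w: "w \<in> signed_perms m"
  shows "int (card {q \<in> {..m} \<times> {1,-1::int}. int (fixc (ins2 m w (fst q) (snd q))) = j}) =
   (if int (fixc w) = j + 1 then 2 * (j + 1) else 0) + (if int (fixc w) = j - 1 then 1 else 0)
   + (if int (fixc w) = j then 2 * int (Suc m) - 2 * j - 1 else 0)"
proof -
  have L: "length w = m" using w by (simp add: sp_iff)
  define P where "P = {..m} \<times> {1,-1::int}"
  define C where "C = fset w \<times> {1,-1::int}"
  define N where "N = {(m, 1::int)}"
  have CP: "C \<subseteq> P" using fset_sub[of w] L by (auto simp: C_def P_def)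
  have NP: "N \<subseteq> P" by (auto simp: N_def P_def)
  have CN: "C \<inter> N = {}" using fset_sub[of w] L by (auto simp: C_def N_def)
  have f: "int (fixc (ins2 m w (fst q) (snd q))) = int (fixc w) - (if q \<in> C then 1 else 0) + (if q \<in> N then 1 else 0)"
    if q: "q \<in> P" for q
  proof -
    obtain p s where qq: "q = (p, s)" by (cases q)
    have ps: "p \<le> m" "s \<in> {1, -1}" using q qq by (auto simp: P_def)
    have "(p \<in> fset w) = ((p, s) \<in> C)" using ps by (auto simp: C_def)
    moreover have "(p = m \<and> s = 1) = ((p, s) \<in> N)" by (simp add: N_def)
    ultimately show ?thesis using qq fixc_ins2[OF w ps] by simp
  qed
  have fin: "finite P" by (simp add: P_def)
  have cC: "card C = 2 * fixc w" by (simp add: C_def card_cartesian_product fixc_def)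
  have cN: "card N = 1" by (simp add: N_def)
  have cP: "card P = 2 * Suc m" by (simp add: P_def card_cartesian_product)
  have "int (card {q \<in> P. int (fixc (ins2 m w (fst q) (snd q))) = j}) =
      (if int (fixc w) = j + 1 then int (card C) else 0) + (if int (fixc w) = j - 1 then int (card N) else 0)
      + (if int (fixc w) = j then int (card P) - int (card C) - int (card N) else 0)"
    by (rule count3[OF fin CP NP CN f])
  then show ?thesis unfolding P_def[symmetric] using cC cN cP by auto
qed

definition Fc :: "int \<Rightarrow> nat \<Rightarrow> int" where
  "Fc j n = int (card {w \<in> signed_perms n. int (fixc w) = j})"

lemma FR:
  "Fc j (Suc m) = 2 * (j + 1) * Fc (j + 1) m + Fc (j - 1) m + (2 * int (Suc m) - 2 * j - 1) * Fc j m"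
proof -
  have "Fc j (Suc m) = int (\<Sum>w\<in>signed_perms m. card {q \<in> {..m} \<times> {1, -1::int}. int (fixc (ins2 m w (fst q) (snd q))) = j})"
    unfolding Fc_def by (subst card_decomp_F) simp
  also have "\<dots> = (\<Sum>w\<in>signed_perms m. int (card {q \<in> {..m} \<times> {1, -1::int}. int (fixc (ins2 m w (fst q) (snd q))) = j}))"
    by (simp add: of_nat_sum)
  also have "\<dots> = (\<Sum>w\<in>signed_perms m. (if int (fixc w) = j + 1 then 2 * (j + 1) else 0) + (if int (fixc w) = j - 1 then 1 else 0)
   + (if int (fixc w) = j then 2 * int (Suc m) - 2 * j - 1 else 0))"
    by (rule sum.cong[OF refl]) (rule F_inner, assumption)
  also have "\<dots> = (\<Sum>w\<in>signed_perms m. if int (fixc w) = j + 1 then 2 * (j + 1) else 0)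
     + (\<Sum>w\<in>signed_perms m. if int (fixc w) = j - 1 then 1 else 0)
     + (\<Sum>w\<in>signed_perms m. if int (fixc w) = j then 2 * int (Suc m) - 2 * j - 1 else 0)"
    by (simp add: sum.distrib)
  also have "\<dots> = 2 * (j + 1) * Fc (j + 1) m + Fc (j - 1) m + (2 * int (Suc m) - 2 * j - 1) * Fc j m"
    unfolding Fc_def by (simp only: sum_if_const[OF finite_sp])
  finally show ?thesis .
qed


lemma sp0: "signed_perms 0 = {[]}"
  by (auto simp: sp_iff)

lemma sp1: "signed_perms 1 = {[1], [-1]}"
proof
  show "signed_perms 1 \<subseteq> {[1], [-1]}"
  proof
    fix xs assume xs: "xs \<in> signed_perms 1"
    hence L: "length xs = 1" by (simp add: sp_iff)
    then obtain x where x: "xs = [x]" by (metis One_nat_def length_0_conv length_Suc_conv)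
    have "abs x = 1" using sp_nth_range[OF xs, of 0] x by simp
    then show "xs \<in> {[1], [-1]}" using x by (auto simp: abs_if split: if_splits)
  qed
next
  show "{[1], [-1]} \<subseteq> signed_perms 1" by (auto simp: sp_iff)
qed

lemma Fc0: "Fc j 0 = (if j = 0 then 1 else 0)"
proof -
  have "fixc [] = 0" by (simp add: fixc_def fset_def)
  hence "{w \<in> signed_perms 0. int (fixc w) = j} = (if j = 0 then {[]} else {})" by (auto simp: sp0)
  then show ?thesis by (simp add: Fc_def)
qed

lemma Qc1: "Qc j (Suc 0) = (if j = 0 then 2 else 0)"
proof -
  have "{w \<in> signed_perms 1. int (bonds w) = j} = {w \<in> {[1], [-1]}. int (bonds w) = j}"
    by (simp only: sp1)
  also have "\<dots> = (if j = 0 then {[1], [-1]} else {})" by auto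
  finally have "{w \<in> signed_perms (Suc 0). int (bonds w) = j} = (if j = 0 then {[1], [-1]} else {})" by simp
  then show ?thesis by (simp add: Qc_def)
qed

lemma alg:
  fixes Q Q1 Qm1 Q0 F A1 A0 Am1 B1 B0 Bm1 Bm2 j M S :: int
  assumes "Q = 2 * (j + 1) * Q1 + Qm1 + (2 * S - 2 * j - 1) * Q0"
    and "Q1 = A1 + B1 - B0" and "Qm1 = Am1 + Bm1 - Bm2" and "Q0 = A0 + B0 - Bm1"
    and "F = 2 * (j + 1) * A1 + Am1 + (2 * S - 2 * j - 1) * A0"
    and "A0 = 2 * (j + 1) * B1 + Bm1 + (2 * M - 2 * j - 1) * B0"
    and "Am1 = 2 * j * B0 + Bm2 + (2 * M - 2 * (j - 1) - 1) * Bm1"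
    and "S = M + 1"
  shows "Q = F + A0 - Am1"
proof -
  have "Q = 2 * (j + 1) * (A1 + B1 - B0) + (Am1 + Bm1 - Bm2) + (2 * (M + 1) - 2 * j - 1) * (A0 + B0 - Bm1)"
    using assms(1-4,8) by simp
  also have "\<dots> = F + A0 - Am1"
    by (simp only: assms(5-8)) (simp add: algebra_simps)
  finally show ?thesis .
qed

lemma main_id:
  assumes "1 \<le> n"
  shows "Qc j n = Fc j n + Fc j (n - 1) - Fc (j - 1) (n - 1)"
  using assms
proof (induction n arbitrary: j rule: nat_induct_at_least)
  case base
  have "Fc j 1 = Fc j (Suc 0)" by simp
  also have "\<dots> = 2 * (j + 1) * Fc (j + 1) 0 + Fc (j - 1) 0 + (2 * int (Suc 0) - 2 * j - 1) * Fc j 0"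
    by (rule FR)
  finally have "Fc j 1 = 2 * (j + 1) * Fc (j + 1) 0 + Fc (j - 1) 0 + (2 * int (Suc 0) - 2 * j - 1) * Fc j 0" .
  then have Fj: "Fc j (Suc 0) = (if j = 0 then 1 else 0) + (if j = 1 then 1 else 0)"
    by (cases "j = 0"; cases "j = 1"; cases "j = -1") (simp_all add: Fc0)
  show ?case using Fj by (cases "j = 0"; cases "j = 1") (simp_all add: Fc0 Qc1)
next
  case (Suc m)
  have IH1: "Qc (j + 1) m = Fc (j + 1) m + Fc (j + 1) (m - 1) - Fc j (m - 1)" using Suc.IH[of "j+1"] by simp
  have IH2: "Qc (j - 1) m = Fc (j - 1) m + Fc (j - 1) (m - 1) - Fc (j - 2) (m - 1)" using Suc.IH[of "j-1"] by simp
  have IH3: "Qc j m = Fc j m + Fc j (m - 1) - Fc (j - 1) (m - 1)" using Suc.IH[of j] by simp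
  have Q: "Qc j (Suc m) = 2 * (j + 1) * Qc (j + 1) m + Qc (j - 1) m + (2 * int (Suc m) - 2 * j - 1) * Qc j m"
    by (rule QR[OF Suc.hyps])
  have F1: "Fc j (Suc m) = 2 * (j + 1) * Fc (j + 1) m + Fc (j - 1) m + (2 * int (Suc m) - 2 * j - 1) * Fc j m"
    by (rule FR)
  obtain k where k: "m = Suc k" using Suc.hyps by (cases m) auto
  have mi: "int m = int k + 1" using k by simp
  have F2: "Fc j m = 2 * (j + 1) * Fc (j + 1) k + Fc (j - 1) k + (2 * int m - 2 * j - 1) * Fc j k"
    unfolding k by (rule FR)
  have F3: "Fc (j - 1) m = 2 * j * Fc j k + Fc (j - 2) k + (2 * int m - 2 * (j - 1) - 1) * Fc (j - 1) k"
    using FR[of "j - 1" k] unfolding k by (simp add: algebra_simps)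
  have km: "m - 1 = k" using k by simp
  note IH1' = IH1[unfolded km] and IH2' = IH2[unfolded km] and IH3' = IH3[unfolded km]
  have "Qc j (Suc m) = Fc j (Suc m) + Fc j m - Fc (j - 1) m"
    by (rule alg[OF Q IH1' IH2' IH3' F1 F2 F3]) simp
  then show ?case by simp
qed

theorem theorem1:
  fixes n :: nat
  assumes "n \<ge> 2"
  shows "Q_B n = D_B n + D_B (n - 1)"
proof -
  have q: "int (Q_B n) = Qc 0 n" unfolding Q_B_def Q_B_eq Qc_def by simp
  have d1: "int (D_B n) = Fc 0 n" unfolding D_B_def D_B_eq Fc_def by simp
  have d2: "int (D_B (n - 1)) = Fc 0 (n - 1)" unfolding D_B_def D_B_eq Fc_def by simp
  have z: "Fc (0 - 1) (n - 1) = 0" unfolding Fc_def by simp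
  have "Qc 0 n = Fc 0 n + Fc 0 (n - 1) - Fc (0 - 1) (n - 1)" using main_id assms by simp
  then have "int (Q_B n) = int (D_B n) + int (D_B (n - 1))" using q d1 d2 z by simp
  then show ?thesis by simp
qed


end
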